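(* Let $T_\sigma$ be a binary separating tree of a separable permutation $\sigma$ of size $k$ and $\tau$ a permutation of size $n$. The dynamic programming algorithm that computes, for all nodes $V$ of $T_\sigma$ (in postfix order) and all $1\le i\le j\le n$, $1\le a\le b\le n$, the entries $M(V,i,j,a,b)$ defined below, storing each entry as an explicit pattern and evaluating each $\mathrm{Longest}$ by exhaustive search over the indicated pairs $(h,c)$, and outputs $M(\text{root},1,n,1,n)$, runs in time $\mathcal{O}(\min(k,n)\,k\,n^6)$. The entries are: $M(V,i,j,a,b)=\epsilon$ if $i>j$ or $a>b$; for a leaf $V$, $M(V,i,j,a,b)=1$ if some $h\in\{i,\dots,j\}$ has $a\le\tau_h\le b$ and $\epsilon$ otherwise; for an internal node with children $V_L,V_R$, $M(V,i,j,a,b)=\mathrm{Longest}\{M(V_L,i,h-1,a,c-1)\oplus M(V_R,h,j,c,b)\}$ if $V$ is labeled $+$ and $\mathrm{Longest}\{M(V_L,i,h-1,c,b)\ominus M(V_R,h,j,a,c-1)\}$ if labeled $-$, both over $i\le h\le j+1$, $a\le c\le b+1$.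
   Context: A permutation is separable if it avoids the patterns $3\,1\,4\,2$ and $2\,4\,1\,3$ ($\pi$ is a pattern of $\sigma$ if some subsequence of $\sigma$ is order-isomorphic to $\pi$). A binary separating tree of $\sigma=\sigma_1\cdots\sigma_k$ is an ordered binary tree with $k$ leaves (read left to right as $\sigma_1,\dots,\sigma_k$), internal nodes labeled $+$ or $-$, such that the entries below each node have values forming an interval and, at a $+$ (resp. $-$) node, values below the left child are all smaller (resp. larger) than those below the right child; it has $\mathcal{O}(k)$ nodes. $\epsilon$ is the empty pattern. For patterns $\pi$ of length $k$ and $\pi'$ of length $k'$: $\pi\oplus\pi'=\pi_1\cdots\pi_k(\pi'_1+k)\cdots(\pi'_{k'}+k)$ and $\pi\ominus\pi'=(\pi_1+k')\cdots(\pi_k+k')\pi'_1\cdots\pi'_{k'}$. $\mathrm{Longest}(S)$ returns an element of maximal length of the set $S$ of patterns. *)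

theory Defs
  imports Main
begin

text \<open>A permutation of size k is a list containing each of 1..k exactly once
  (one-line notation; entry i of the paper is xs ! (i-1)).\<close>
definition is_perm :: "nat list \<Rightarrow> bool" where
  "is_perm xs \<longleftrightarrow> distinct xs \<and> set xs = {1..length xs}"

definition contains_pattern :: "nat list \<Rightarrow> nat list \<Rightarrow> bool" where
  "contains_pattern sigma pi \<longleftrightarrow>
     (\<exists>ys \<in> set (subseqs sigma). length ys = length pi \<and>
        (\<forall>i < length pi. \<forall>j < length pi. ys ! i < ys ! j \<longleftrightarrow> pi ! i < pi ! j))"

definition separable :: "nat list \<Rightarrow> bool" where
  "separable sigma \<longleftrightarrow> \<not> contains_pattern sigma [3,1,4,2] \<and> \<not> contains_pattern sigma [2,4,1,3]"

datatype sign = Plus | Minus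

datatype stree = Leaf | Node sign stree stree

fun leaves :: "stree \<Rightarrow> nat" where
  "leaves Leaf = 1"
| "leaves (Node s L R) = leaves L + leaves R"

definition is_interval :: "nat set \<Rightarrow> bool" where
  "is_interval A \<longleftrightarrow> (\<exists>lo hi. A = {lo..hi})"

fun is_sep_tree :: "stree \<Rightarrow> nat list \<Rightarrow> bool" where
  "is_sep_tree Leaf xs = (length xs = 1)"
| "is_sep_tree (Node s L R) xs =
     (let ys = take (leaves L) xs; zs = drop (leaves L) xs in
        length xs = leaves L + leaves R \<and> is_interval (set xs) \<and>
        (case s of
           Plus \<Rightarrow> (\<forall>y\<in>set ys. \<forall>z\<in>set zs. y < z)
         | Minus \<Rightarrow> (\<forall>y\<in>set ys. \<forall>z\<in>set zs. y > z)) \<and>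
        is_sep_tree L ys \<and> is_sep_tree R zs)"

fun postorder :: "stree \<Rightarrow> stree list" where
  "postorder Leaf = [Leaf]"
| "postorder (Node s L R) = postorder L @ postorder R @ [Node s L R]"

definition oplus :: "nat list \<Rightarrow> nat list \<Rightarrow> nat list" where
  "oplus p q = p @ map (\<lambda>x. x + length p) q"

definition ominus :: "nat list \<Rightarrow> nat list \<Rightarrow> nat list" where
  "ominus p q = map (\<lambda>x. x + length q) p @ q"

definition longest :: "nat list list \<Rightarrow> nat list" where
  "longest xs = foldl (\<lambda>best x. if length best < length x then x else best) [] xs"

fun M :: "stree \<Rightarrow> nat list \<Rightarrow> nat \<Rightarrow> nat \<Rightarrow> nat \<Rightarrow> nat \<Rightarrow> nat list" where
  "M Leaf tau i j a b =
     (if j < i \<or> b < a then []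
      else if (\<exists>h\<in>{i..j}. a \<le> tau ! (h - 1) \<and> tau ! (h - 1) \<le> b) then [1] else [])"
| "M (Node Plus L R) tau i j a b =
     (if j < i \<or> b < a then []
      else longest [oplus (M L tau i (h - 1) a (c - 1)) (M R tau h j c b).
                      h \<leftarrow> [i..<j + 2], c \<leftarrow> [a..<b + 2]])"
| "M (Node Minus L R) tau i j a b =
     (if j < i \<or> b < a then []
      else longest [ominus (M L tau i (h - 1) c b) (M R tau h j a (c - 1)).
                      h \<leftarrow> [i..<j + 2], c \<leftarrow> [a..<b + 2]])"

text \<open>Cost of computing one entry M(V,i,j,a,b), the children's entries being already stored:
  an epsilon entry costs 1; a leaf entry scans h = i..j; an internal entry considers every
  pair (h,c), looks up the two stored child patterns, builds the explicit pattern
  (cost proportional to its length) and compares lengths: 1 + |left| + |right| per pair.\<close>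
fun entry_cost :: "stree \<Rightarrow> nat list \<Rightarrow> nat \<Rightarrow> nat \<Rightarrow> nat \<Rightarrow> nat \<Rightarrow> nat" where
  "entry_cost Leaf tau i j a b = (if j < i \<or> b < a then 1 else j - i + 2)"
| "entry_cost (Node Plus L R) tau i j a b =
     (if j < i \<or> b < a then 1
      else sum_list [1 + length (M L tau i (h - 1) a (c - 1)) + length (M R tau h j c b).
                      h \<leftarrow> [i..<j + 2], c \<leftarrow> [a..<b + 2]])"
| "entry_cost (Node Minus L R) tau i j a b =
     (if j < i \<or> b < a then 1
      else sum_list [1 + length (M L tau i (h - 1) c b) + length (M R tau h j a (c - 1)).
                      h \<leftarrow> [i..<j + 2], c \<leftarrow> [a..<b + 2]])"

definition node_cost :: "stree \<Rightarrow> nat list \<Rightarrow> nat" where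
  "node_cost V tau = (let n = length tau in
     sum_list [entry_cost V tau i j a b. i \<leftarrow> [1..<n + 1], j \<leftarrow> [i..<n + 1],
                                         a \<leftarrow> [1..<n + 1], b \<leftarrow> [a..<n + 1]])"

definition dp_cost :: "stree \<Rightarrow> nat list \<Rightarrow> nat" where
  "dp_cost T tau = sum_list (map (\<lambda>V. node_cost V tau) (postorder T))
                   + length (M T tau 1 (length tau) 1 (length tau))"

end

theory Submission
  imports Defs
begin

lemma longest_aux:
  "length best \<le> B \<Longrightarrow> (\<And>x. x \<in> set xs \<Longrightarrow> length x \<le> B) \<Longrightarrow>
   length (foldl (\<lambda>best x. if length best < length x then x else best) best xs) \<le> B"
  by (induction xs arbitrary: best) auto

lemma longest_le: "(\<And>x. x \<in> set xs \<Longrightarrow> length x \<le> B) \<Longrightarrow> length (longest xs) \<le> B"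
  unfolding longest_def by (rule longest_aux) auto

lemma M_len_leaves: "length (M V tau i j a b) \<le> leaves V"
proof (induction V arbitrary: i j a b)
  case (Node s L R)
  have H: "length (M L tau i1 j1 a1 b1) + length (M R tau i2 j2 a2 b2) \<le> leaves L + leaves R"
    for i1 j1 a1 b1 i2 j2 a2 b2
    using add_mono[OF Node.IH(1) Node.IH(2)] by blast
  show ?case
  proof (cases s)
    case Plus then show ?thesis
      by (auto intro!: longest_le simp: oplus_def H)
  next
    case Minus then show ?thesis
      by (auto intro!: longest_le simp: ominus_def H)
  qed
qed auto

lemma M_len_pos: "1 \<le> i \<Longrightarrow> length (M V tau i j a b) \<le> Suc j - i"
proof (induction V tau i j a b rule: M.induct)
  case (2 L R tau i j a b)
  show ?case
  proof (cases "j < i \<or> b < a")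
    case False
    have key: "length (M L tau i (h - Suc 0) a (c - Suc 0)) + length (M R tau h j c b) \<le> Suc j - i"
      if h: "i \<le> h" "h < j + 2" and c: "a \<le> c" "c < b + 2" for h c
    proof -
      have hm: "h \<in> set [i..<j+2]" "c \<in> set [a..<b+2]" using h c by auto
      have "length (M L tau i (h - Suc 0) a (c - Suc 0)) \<le> Suc (h - Suc 0) - i"
        using 2(1)[OF False hm] 2(3) by simp
      moreover have "length (M R tau h j c b) \<le> Suc j - h"
        using 2(2)[OF False hm] h 2(3) by simp
      ultimately show ?thesis
        using h 2(3) by linarith
    qed
    show ?thesis unfolding M.simps if_not_P[OF False]
      by (rule longest_le) (auto simp: oplus_def simp del: upt_Suc intro!: key)
  qed auto
next
  case (3 L R tau i j a b)
  show ?case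
  proof (cases "j < i \<or> b < a")
    case False
    have key: "length (M L tau i (h - Suc 0) c b) + length (M R tau h j a (c - Suc 0)) \<le> Suc j - i"
      if h: "i \<le> h" "h < j + 2" and c: "a \<le> c" "c < b + 2" for h c
    proof -
      have hm: "h \<in> set [i..<j+2]" "c \<in> set [a..<b+2]" using h c by auto
      have "length (M L tau i (h - Suc 0) c b) \<le> Suc (h - Suc 0) - i"
        using 3(1)[OF False hm] 3(3) by simp
      moreover have "length (M R tau h j a (c - Suc 0)) \<le> Suc j - h"
        using 3(2)[OF False hm] h 3(3) by simp
      ultimately show ?thesis
        using h 3(3) by linarith
    qed
    show ?thesis unfolding M.simps if_not_P[OF False]
      by (rule longest_le) (auto simp: ominus_def simp del: upt_Suc intro!: key)
  qed auto
qed auto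

lemma M_len_m: "1 \<le> i \<Longrightarrow> j \<le> n \<Longrightarrow> leaves V \<le> k \<Longrightarrow> length (M V tau i j a b) \<le> min k n"
  using M_len_leaves[of V tau i j a b] M_len_pos[of i V tau j a b] by auto

lemma sl_bound: "(\<And>x. x \<in> set xs \<Longrightarrow> f x \<le> B) \<Longrightarrow> length xs \<le> p \<Longrightarrow> sum_list (map f xs) \<le> p * (B::nat)"
proof -
  assume a: "\<And>x. x \<in> set xs \<Longrightarrow> f x \<le> B" and l: "length xs \<le> p"
  have "sum_list (map f xs) \<le> length xs * B"
    using a by (induction xs) (auto intro: add_mono)
  also have "\<dots> \<le> p * B" using l by simp
  finally show ?thesis .
qed

lemma slc_bound: "(\<And>x. x \<in> set xs \<Longrightarrow> sum_list (g x) \<le> B) \<Longrightarrow> length xs \<le> p \<Longrightarrow>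
   sum_list (concat (map g xs)) \<le> p * (B::nat)"
proof -
  assume a: "\<And>x. x \<in> set xs \<Longrightarrow> sum_list (g x) \<le> B" and l: "length xs \<le> p"
  have "sum_list (concat (map g xs)) = sum_list (map (\<lambda>x. sum_list (g x)) xs)"
    by (induction xs) auto
  also have "\<dots> \<le> p * B" by (rule sl_bound[OF a l])
  finally show ?thesis .
qed

lemma entry_bound:
  assumes "1 \<le> i" "j \<le> n" "b \<le> n" "leaves V \<le> k"
  shows "entry_cost V tau i j a b \<le> (n+2)*((n+2)*(1+2*min k n))"
proof (cases V)
  case Leaf
  have "n + 2 \<le> (n+2)*((n+2)*(1+2*min k n))" by simp
  then show ?thesis using Leaf assms by auto
next
  case (Node s L R)
  have lL: "leaves L \<le> k" and lR: "leaves R \<le> k" using assms(4) Node by auto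
  show ?thesis
  proof (cases "j < i \<or> b < a")
    case True then show ?thesis using Node by (cases s) auto
  next
    case False
    show ?thesis
    proof (cases s)
      case Plus
      have "sum_list [1 + length (M L tau i (h - 1) a (c - 1)) + length (M R tau h j c b).
                      h \<leftarrow> [i..<j + 2], c \<leftarrow> [a..<b + 2]] \<le> (n+2)*((n+2)*(1+2*min k n))"
      proof (rule slc_bound)
        fix h assume h: "h \<in> set [i..<j+2]"
        show "sum_list (map (\<lambda>c. 1 + length (M L tau i (h - 1) a (c - 1)) + length (M R tau h j c b)) [a..<b + 2])
              \<le> (n+2)*(1+2*min k n)"
        proof (rule sl_bound)
          fix c
          have "length (M L tau i (h - 1) a (c - 1)) \<le> min k n"
            using h assms by (intro M_len_m lL) auto
          moreover have "length (M R tau h j c b) \<le> min k n"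
            using h assms by (intro M_len_m lR) auto
          ultimately show "1 + length (M L tau i (h - 1) a (c - 1)) + length (M R tau h j c b) \<le> 1 + 2 * min k n"
            by linarith
        qed (use assms in auto)
      qed (use assms in auto)
      then show ?thesis using Node Plus False by simp
    next
      case Minus
      have "sum_list [1 + length (M L tau i (h - 1) c b) + length (M R tau h j a (c - 1)).
                      h \<leftarrow> [i..<j + 2], c \<leftarrow> [a..<b + 2]] \<le> (n+2)*((n+2)*(1+2*min k n))"
      proof (rule slc_bound)
        fix h assume h: "h \<in> set [i..<j+2]"
        show "sum_list (map (\<lambda>c. 1 + length (M L tau i (h - 1) c b) + length (M R tau h j a (c - 1))) [a..<b + 2])
              \<le> (n+2)*(1+2*min k n)"
        proof (rule sl_bound)
          fix c
          have "length (M L tau i (h - 1) c b) \<le> min k n"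
            using h assms by (intro M_len_m lL) auto
          moreover have "length (M R tau h j a (c - 1)) \<le> min k n"
            using h assms by (intro M_len_m lR) auto
          ultimately show "1 + length (M L tau i (h - 1) c b) + length (M R tau h j a (c - 1)) \<le> 1 + 2 * min k n"
            by linarith
        qed (use assms in auto)
      qed (use assms in auto)
      then show ?thesis using Node Minus False by simp
    qed
  qed
qed

lemma node_bound:
  assumes "leaves V \<le> k"
  shows "node_cost V tau \<le> length tau * (length tau * (length tau * (length tau *
           ((length tau+2)*((length tau+2)*(1+2*min k (length tau)))))))"
  unfolding node_cost_def Let_def
  apply (rule slc_bound, rule slc_bound, rule slc_bound, rule sl_bound, rule entry_bound)
  using assms by auto

lemma sep_len: "is_sep_tree T xs \<Longrightarrow> length xs = leaves T"
  by (induction T arbitrary: xs) (auto simp: Let_def)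

lemma leaves_pos: "1 \<le> leaves T"
  by (induction T) auto

lemma post_len: "length (postorder T) + 1 = 2 * leaves T"
  by (induction T) auto

lemma post_leaves: "V \<in> set (postorder T) \<Longrightarrow> leaves V \<le> leaves T"
  by (induction T) auto

theorem proposition4:
  shows "\<exists>C::nat. \<forall>sigma T tau.
           is_perm sigma \<and> separable sigma \<and> is_sep_tree T sigma \<and>
           is_perm tau \<and> 1 \<le> length tau \<longrightarrow>
           dp_cost T tau \<le> C * min (length sigma) (length tau) * length sigma * length tau ^ 6"
proof (intro exI allI impI)
  fix sigma T tau
  assume A: "is_perm sigma \<and> separable sigma \<and> is_sep_tree T sigma \<and> is_perm tau \<and> 1 \<le> length tau"
  define n where "n = length tau"
  define k where "k = length sigma"
  define m where "m = min k n"
  have kl: "k = leaves T" using A sep_len k_def by auto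
  have k1: "1 \<le> k" using kl leaves_pos by simp
  have n1: "1 \<le> n" using A n_def by simp
  have m1: "1 \<le> m" using k1 n1 m_def by simp
  have E: "(n+2)*((n+2)*(1+2*m)) \<le> 27 * m * n^2"
  proof -
    have "n + 2 \<le> 3 * n" using n1 by simp
    moreover have "1 + 2*m \<le> 3*m" using m1 by simp
    ultimately have "(n+2)*((n+2)*(1+2*m)) \<le> (3*n)*((3*n)*(3*m))"
      by (intro mult_mono) auto
    then show ?thesis by (simp add: power2_eq_square algebra_simps)
  qed
  have NC: "node_cost V tau \<le> 27 * m * n^6" if "V \<in> set (postorder T)" for V
  proof -
    have "node_cost V tau \<le> n * (n * (n * (n * ((n+2)*((n+2)*(1+2*m))))))"
      using node_bound[of V k tau] post_leaves[OF that] kl n_def m_def by simp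
    also have "\<dots> \<le> n * (n * (n * (n * (27 * m * n^2))))"
      using E by (intro mult_le_mono2)
    also have "\<dots> = 27 * m * n^6" by (simp add: power_def algebra_simps numeral_eq_Suc)
    finally show ?thesis .
  qed
  have S: "sum_list (map (\<lambda>V. node_cost V tau) (postorder T)) \<le> (2*k) * (27 * m * n^6)"
    by (rule sl_bound) (use NC post_len[of T] kl in auto)
  have L: "length (M T tau 1 (length tau) 1 (length tau)) \<le> m * k * n^6"
  proof -
    have "length (M T tau 1 (length tau) 1 (length tau)) \<le> m"
      using M_len_m[of 1 "length tau" n T k tau 1 "length tau"] kl n_def m_def by simp
    also have "m \<le> m * k * n^6"
      using k1 n1 by simp
    finally show ?thesis .
  qed
  have "dp_cost T tau \<le> (2*k) * (27 * m * n^6) + m * k * n^6"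
    unfolding dp_cost_def using S L by linarith
  also have "\<dots> = 55 * m * k * n^6" by (simp add: algebra_simps)
  finally show "dp_cost T tau \<le> 55 * min (length sigma) (length tau) * length sigma * length tau ^ 6"
    using m_def k_def n_def by simp
qed

end
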